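(* Let $q(\bar x)\,{:}{-}\,A\wedge C$ be a conjunctive query with comparisons. If $q_1$ and $q_2$ are both cores of $q$, then $q_1$ and $q_2$ are isomorphic via a bijection that is the identity on the variables $\bar x$.
   Context: Fix a dense linearly ordered domain $\Delta$ of constants; terms are constants or variables. A conjunctive query with comparisons (CQC) $q(\bar x)\,{:}{-}\,A\wedge C$ consists of distinguished variables $\bar x$, a finite set $A$ of relational atoms over terms, and a finite set $C$ of comparisons $s\,\rho\,t$, $\rho\in\{=,<,\le\}$. $C\models s\,\rho\,t$ means every assignment to $\Delta$ satisfying $C$ satisfies $s\,\rho\,t$. For CQCs $q_1(\bar x)\,{:}{-}\,A_1\wedge C_1$, $q_2(\bar x)\,{:}{-}\,A_2\wedge C_2$, a homomorphism $q_1\to_{\bar x}q_2$ is a map $h$ from terms of $q_1$ to terms of $q_2$, identity on constants and on $\bar x$, with $h(A_1)\subseteq A_2$ and $C_2\models h(r)\,\rho\,h(s)$ for all $r\,\rho\,s\in C_1$. An isomorphism is a bijection $h$ between variables, identity on constants (and on $\bar x$), with $h(A_1)=A_2$ and $h(C_1)=C_2$. The extension $\mathrm{ext}(q)$ replaces $C$ by $\{r\,\rho\,s: r,s\text{ terms of }q,\ C\models r\,\rho\,s\}$. A core of $q$ is a CQC $q'$ such that (1) $q\to_{\bar x}q'$; (2) for every CQC $q''$ with $q\to_{\bar x}q''$ and $q''\to_{\bar x}q$ there is an injective homomorphism $q'\to_{\bar x}q''$; (3) $q'=\mathrm{ext}(q')$. *)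

theory Defs
  imports Main
begin

datatype cmp = Eq | Lt | Le

datatype ('c, 'v) trm = Cst 'c | Vr 'v

type_synonym ('r, 'c, 'v) atom = "'r \<times> ('c, 'v) trm list"
type_synonym ('c, 'v) comparison = "('c, 'v) trm \<times> cmp \<times> ('c, 'v) trm"

text \<open>A CQC body: relational atoms A and comparisons C. The distinguished
  variables x-bar are passed separately as a list.\<close>
datatype ('r, 'c, 'v) cqc =
  CQC (atoms: "('r, 'c, 'v) atom set") (comps: "('c, 'v) comparison set")

definition is_cqc :: "('r, 'c, 'v) cqc \<Rightarrow> bool" where
  "is_cqc q \<longleftrightarrow> finite (atoms q) \<and> finite (comps q)"

fun eval :: "('v \<Rightarrow> 'c) \<Rightarrow> ('c, 'v) trm \<Rightarrow> 'c" where
  "eval \<sigma> (Cst c) = c"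
| "eval \<sigma> (Vr v) = \<sigma> v"

fun holds :: "cmp \<Rightarrow> 'c::linorder \<Rightarrow> 'c \<Rightarrow> bool" where
  "holds Eq a b \<longleftrightarrow> a = b"
| "holds Lt a b \<longleftrightarrow> a < b"
| "holds Le a b \<longleftrightarrow> a \<le> b"

definition entails :: "('c::linorder, 'v) comparison set \<Rightarrow> ('c, 'v) comparison \<Rightarrow> bool" where
  "entails C c \<longleftrightarrow>
     (\<forall>\<sigma> :: 'v \<Rightarrow> 'c. (\<forall>(a, r, b) \<in> C. holds r (eval \<sigma> a) (eval \<sigma> b)) \<longrightarrow>
        (case c of (s, r, t) \<Rightarrow> holds r (eval \<sigma> s) (eval \<sigma> t)))"

definition terms :: "('r, 'c, 'v) cqc \<Rightarrow> ('c, 'v) trm set" where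
  "terms q = (\<Union>(R, ts) \<in> atoms q. set ts) \<union> (\<Union>(a, r, b) \<in> comps q. {a, b})"

definition vars :: "('r, 'c, 'v) cqc \<Rightarrow> 'v set" where
  "vars q = {v. Vr v \<in> terms q}"

fun subst :: "('v \<Rightarrow> ('c, 'v) trm) \<Rightarrow> ('c, 'v) trm \<Rightarrow> ('c, 'v) trm" where
  "subst h (Cst c) = Cst c"
| "subst h (Vr v) = h v"

definition hom :: "'v list \<Rightarrow> ('r, 'c::linorder, 'v) cqc \<Rightarrow> ('r, 'c, 'v) cqc
                    \<Rightarrow> ('v \<Rightarrow> ('c, 'v) trm) \<Rightarrow> bool" where
  "hom xs q1 q2 h \<longleftrightarrow>
     (\<forall>t \<in> terms q1. subst h t \<in> terms q2) \<and>
     (\<forall>x \<in> set xs. h x = Vr x) \<and>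
     (\<forall>(R, ts) \<in> atoms q1. (R, map (subst h) ts) \<in> atoms q2) \<and>
     (\<forall>(a, r, b) \<in> comps q1. entails (comps q2) (subst h a, r, subst h b))"

definition inj_hom :: "'v list \<Rightarrow> ('r, 'c::linorder, 'v) cqc \<Rightarrow> ('r, 'c, 'v) cqc
                    \<Rightarrow> ('v \<Rightarrow> ('c, 'v) trm) \<Rightarrow> bool" where
  "inj_hom xs q1 q2 h \<longleftrightarrow> hom xs q1 q2 h \<and> inj_on (subst h) (terms q1)"

definition ext :: "('r, 'c::linorder, 'v) cqc \<Rightarrow> ('r, 'c, 'v) cqc" where
  "ext q = CQC (atoms q)
     {(a, r, b). a \<in> terms q \<and> b \<in> terms q \<and> entails (comps q) (a, r, b)}"

definition is_core :: "'v list \<Rightarrow> ('r, 'c::linorder, 'v) cqc \<Rightarrow> ('r, 'c, 'v) cqc \<Rightarrow> bool" where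
  "is_core xs q q' \<longleftrightarrow>
     is_cqc q' \<and>
     (\<exists>h. hom xs q q' h) \<and>
     (\<forall>q''. is_cqc q'' \<and> (\<exists>h. hom xs q q'' h) \<and> (\<exists>h. hom xs q'' q h) \<longrightarrow>
            (\<exists>h. inj_hom xs q' q'' h)) \<and>
     q' = ext q'"

fun ren :: "('v \<Rightarrow> 'v) \<Rightarrow> ('c, 'v) trm \<Rightarrow> ('c, 'v) trm" where
  "ren h (Cst c) = Cst c"
| "ren h (Vr v) = Vr (h v)"

definition iso :: "'v list \<Rightarrow> ('r, 'c, 'v) cqc \<Rightarrow> ('r, 'c, 'v) cqc \<Rightarrow> ('v \<Rightarrow> 'v) \<Rightarrow> bool" where
  "iso xs q1 q2 h \<longleftrightarrow>
     bij_betw h (vars q1) (vars q2) \<and>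
     (\<forall>x \<in> set xs. (x \<in> vars q1 \<longrightarrow> h x = x) \<and> (x \<in> vars q2 \<longrightarrow> x \<in> vars q1)) \<and>
     (\<lambda>(R, ts). (R, map (ren h) ts)) ` atoms q1 = atoms q2 \<and>
     (\<lambda>(a, r, b). (ren h a, r, ren h b)) ` comps q1 = comps q2"

end

theory Submission
  imports Defs
begin

lemma fin_bij_image:
  assumes "finite A" "finite B" "inj_on F A" "F ` A \<subseteq> B" "inj_on G B" "G ` B \<subseteq> A"
  shows "F ` A = B"
proof -
  have "card A \<le> card B" using card_inj_on_le assms by blast
  moreover have "card B \<le> card A" using card_inj_on_le assms by blast
  ultimately have "card (F ` A) = card B" using card_image[OF assms(3)] by simp
  thus ?thesis using card_subset_eq assms by blast
qed

lemma terms_finite: "is_cqc q \<Longrightarrow> finite (terms q)"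
  unfolding is_cqc_def terms_def by auto

lemma atom_terms: "(R, ts) \<in> atoms q \<Longrightarrow> set ts \<subseteq> terms q"
  unfolding terms_def by auto

lemma comp_terms: "(a, r, b) \<in> comps q \<Longrightarrow> a \<in> terms q \<and> b \<in> terms q"
  unfolding terms_def by auto

lemma ext_comps: "q = ext q \<Longrightarrow>
   comps q = {(a, r, b). a \<in> terms q \<and> b \<in> terms q \<and> entails (comps q) (a, r, b)}"
proof -
  assume a: "q = ext q"
  have "comps q = comps (ext q)" using a by (rule arg_cong)
  also have "\<dots> = {(a, r, b). a \<in> terms q \<and> b \<in> terms q \<and> entails (comps q) (a, r, b)}"
    unfolding ext_def by simp
  finally show ?thesis .
qed

lemma atoms_into:
  assumes "hom xs q1 q2 h1" "inj_on (subst h1) (terms q1)"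
  shows "inj_on (\<lambda>(R, ts). (R, map (subst h1) ts)) (atoms q1)
     \<and> (\<lambda>(R, ts). (R, map (subst h1) ts)) ` atoms q1 \<subseteq> atoms q2"
proof
  show "inj_on (\<lambda>(R, ts). (R, map (subst h1) ts)) (atoms q1)"
  proof (rule inj_onI)
    fix x y assume x: "x \<in> atoms q1" and y: "y \<in> atoms q1"
      and e0: "(\<lambda>(R, ts). (R, map (subst h1) ts)) x = (\<lambda>(R, ts). (R, map (subst h1) ts)) y"
    obtain R ts where xa: "x = (R, ts)" by (cases x) auto
    obtain R' ts' where ya: "y = (R', ts')" by (cases y) auto
    have a: "(R, ts) \<in> atoms q1" "(R', ts') \<in> atoms q1" using x y xa ya by auto
    have e: "(R, map (subst h1) ts) = (R', map (subst h1) ts')" using e0 xa ya by simp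
    have "set ts \<subseteq> terms q1" "set ts' \<subseteq> terms q1" using atom_terms[OF a(1)] atom_terms[OF a(2)] by auto
    hence "inj_on (subst h1) (set ts \<union> set ts')" using assms(2) inj_on_subset by (metis Un_subset_iff)
    moreover have "map (subst h1) ts = map (subst h1) ts'" "R = R'" using e by simp_all
    ultimately have "R = R' \<and> ts = ts'" using inj_on_map_eq_map by blast
    thus "x = y" using xa ya by simp
  qed
  have "\<forall>(R, ts) \<in> atoms q1. (R, map (subst h1) ts) \<in> atoms q2"
    using assms(1) unfolding hom_def by (elim conjE)
  thus "(\<lambda>(R, ts). (R, map (subst h1) ts)) ` atoms q1 \<subseteq> atoms q2" by auto
qed

lemma comps_into:
  assumes "hom xs q1 q2 h1" "inj_on (subst h1) (terms q1)" "q2 = ext q2"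
  shows "inj_on (\<lambda>(a, r, b). (subst h1 a, r, subst h1 b)) (comps q1)
     \<and> (\<lambda>(a, r, b). (subst h1 a, r, subst h1 b)) ` comps q1 \<subseteq> comps q2"
proof
  show "inj_on (\<lambda>(a, r, b). (subst h1 a, r, subst h1 b)) (comps q1)"
  proof (rule inj_onI)
    fix x y assume x: "x \<in> comps q1" and y: "y \<in> comps q1"
      and e0: "(\<lambda>(a, r, b). (subst h1 a, r, subst h1 b)) x = (\<lambda>(a, r, b). (subst h1 a, r, subst h1 b)) y"
    obtain a r b where xa: "x = (a, r, b)" by (cases x) auto
    obtain a' r' b' where ya: "y = (a', r', b')" by (cases y) auto
    have c: "(a, r, b) \<in> comps q1" "(a', r', b') \<in> comps q1" using x y xa ya by auto
    have e: "(subst h1 a, r, subst h1 b) = (subst h1 a', r', subst h1 b')" using e0 xa ya by simp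
    have "a = a' \<and> r = r' \<and> b = b'"
      using comp_terms[OF c(1)] comp_terms[OF c(2)] e assms(2) by (auto dest: inj_onD)
    thus "x = y" using xa ya by simp
  qed
  show "(\<lambda>(a, r, b). (subst h1 a, r, subst h1 b)) ` comps q1 \<subseteq> comps q2"
  proof clarify
    fix a r b assume c: "(a, r, b) \<in> comps q1"
    have "\<forall>(a, r, b) \<in> comps q1. entails (comps q2) (subst h1 a, r, subst h1 b)"
      using assms(1) unfolding hom_def by (elim conjE)
    hence "entails (comps q2) (subst h1 a, r, subst h1 b)" using c by blast
    moreover have "\<forall>t \<in> terms q1. subst h1 t \<in> terms q2" using assms(1) unfolding hom_def by (elim conjE)
    hence "subst h1 a \<in> terms q2" "subst h1 b \<in> terms q2"
      using comp_terms[OF c] by blast+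
    ultimately show "(subst h1 a, r, subst h1 b) \<in> comps q2"
      using ext_comps[OF assms(3)] by auto
  qed
qed

theorem mainTheorem2:
  fixes q q1 q2 :: "('r, 'c::dense_linorder, 'v) cqc" and xs :: "'v list"
  assumes "is_cqc q"
    and "is_core xs q q1"
    and "is_core xs q q2"
  shows "\<exists>h. iso xs q1 q2 h"
proof -
  have c1: "is_cqc q1" "\<exists>h. hom xs q q1 h" "q1 = ext q1"
    and u1: "\<And>q''. is_cqc q'' \<Longrightarrow> (\<exists>h. hom xs q q'' h) \<Longrightarrow> (\<exists>h. hom xs q'' q h) \<Longrightarrow> (\<exists>h. inj_hom xs q1 q'' h)"
    using assms(2) unfolding is_core_def by blast+
  have c2: "is_cqc q2" "\<exists>h. hom xs q q2 h" "q2 = ext q2"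
    and u2: "\<And>q''. is_cqc q'' \<Longrightarrow> (\<exists>h. hom xs q q'' h) \<Longrightarrow> (\<exists>h. hom xs q'' q h) \<Longrightarrow> (\<exists>h. inj_hom xs q2 q'' h)"
    using assms(3) unfolding is_core_def by blast+
  have st': "subst Vr = (\<lambda>t::('c,'v) trm. t)"
  proof (rule HOL.ext)
    fix t :: "('c,'v) trm" show "subst Vr t = t" by (cases t) auto
  qed
  have hqq: "hom xs q q (\<lambda>v. Vr v)"
    unfolding hom_def entails_def by (auto simp: st')
  obtain g1 where "inj_hom xs q1 q g1" using u1[OF assms(1)] hqq by blast
  hence b1: "\<exists>h. hom xs q1 q h" unfolding inj_hom_def by blast
  obtain g2 where "inj_hom xs q2 q g2" using u2[OF assms(1)] hqq by blast
  hence b2: "\<exists>h. hom xs q2 q h" unfolding inj_hom_def by blast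
  obtain h1 where H1: "hom xs q1 q2 h1" "inj_on (subst h1) (terms q1)"
    using u1[OF c2(1) c2(2) b2] unfolding inj_hom_def by blast
  obtain h2 where H2: "hom xs q2 q1 h2" "inj_on (subst h2) (terms q2)"
    using u2[OF c1(1) c1(2) b1] unfolding inj_hom_def by blast
  have ft1: "finite (terms q1)" and ft2: "finite (terms q2)" using c1 c2 terms_finite by blast+
  have "\<forall>t \<in> terms q1. subst h1 t \<in> terms q2" using H1(1) unfolding hom_def by (elim conjE)
  hence i1: "subst h1 ` terms q1 \<subseteq> terms q2" by blast
  have "\<forall>t \<in> terms q2. subst h2 t \<in> terms q1" using H2(1) unfolding hom_def by (elim conjE)
  hence i2: "subst h2 ` terms q2 \<subseteq> terms q1" by blast
  have T: "subst h1 ` terms q1 = terms q2"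
    using fin_bij_image[OF ft1 ft2 H1(2) i1 H2(2) i2] .
  have vv: "\<exists>w. h1 v = Vr w" if "v \<in> vars q1" for v
  proof (cases "h1 v")
    case (Cst c)
    have "Cst c \<in> terms q2" using i1 that Cst unfolding vars_def by force
    hence "Cst c \<in> terms q1" using i2 by force
    moreover have "subst h1 (Cst c) = subst h1 (Vr v)" using Cst by simp
    moreover have "Vr v \<in> terms q1" using that unfolding vars_def by simp
    ultimately have "Cst c = Vr v"
      using inj_onD[OF H1(2)] by blast
    thus ?thesis by simp
  qed auto
  define h where "h v = (case h1 v of Vr w \<Rightarrow> w | Cst _ \<Rightarrow> v)" for v
  have hv: "Vr (h v) = h1 v" if "v \<in> vars q1" for v
    using vv[OF that] unfolding h_def by auto
  have rs: "ren h t = subst h1 t" if "t \<in> terms q1" for t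
    using that hv by (cases t) (auto simp: vars_def)
  have bij: "bij_betw h (vars q1) (vars q2)"
    unfolding bij_betw_def
  proof
    show "inj_on h (vars q1)"
    proof (rule inj_onI)
      fix v w assume a: "v \<in> vars q1" "w \<in> vars q1" "h v = h w"
      hence "subst h1 (Vr v) = subst h1 (Vr w)" using hv by (metis subst.simps(2))
      moreover have "Vr v \<in> terms q1" "Vr w \<in> terms q1" using a unfolding vars_def by simp_all
      ultimately have "Vr v = (Vr w :: ('c,'v) trm)" using inj_onD[OF H1(2)] by blast
      thus "v = w" by simp
    qed
    show "h ` vars q1 = vars q2"
    proof
      show "h ` vars q1 \<subseteq> vars q2"
        using hv i1 unfolding vars_def by force
      show "vars q2 \<subseteq> h ` vars q1"
      proof
        fix w assume "w \<in> vars q2"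
        hence "Vr w \<in> subst h1 ` terms q1" using T unfolding vars_def by auto
        then obtain t where t: "t \<in> terms q1" "Vr w = subst h1 t" by auto
        then obtain v where v: "t = Vr v" by (cases t) auto
        hence vq: "v \<in> vars q1" using t unfolding vars_def by auto
        moreover have "h v = w"
        proof -
          have "Vr (h v) = h1 v" using hv[OF vq] .
          also have "\<dots> = Vr w" using t v by simp
          finally show ?thesis by simp
        qed
        ultimately show "w \<in> h ` vars q1" by blast
      qed
    qed
  qed
  have xsc: "\<forall>x \<in> set xs. (x \<in> vars q1 \<longrightarrow> h x = x) \<and> (x \<in> vars q2 \<longrightarrow> x \<in> vars q1)"
  proof
    fix x assume x: "x \<in> set xs"
    have "\<forall>x \<in> set xs. h1 x = Vr x" using H1(1) unfolding hom_def by (elim conjE)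
    moreover have "\<forall>x \<in> set xs. h2 x = Vr x" using H2(1) unfolding hom_def by (elim conjE)
    ultimately have "h1 x = Vr x" "h2 x = Vr x" using x by blast+
    thus "(x \<in> vars q1 \<longrightarrow> h x = x) \<and> (x \<in> vars q2 \<longrightarrow> x \<in> vars q1)"
      using hv i2 unfolding vars_def by force
  qed
  have fa1: "finite (atoms q1)" "finite (comps q1)" using c1(1) unfolding is_cqc_def by auto
  have fa2: "finite (atoms q2)" "finite (comps q2)" using c2(1) unfolding is_cqc_def by auto
  have A: "(\<lambda>(R, ts). (R, map (subst h1) ts)) ` atoms q1 = atoms q2"
    using atoms_into[OF H1] atoms_into[OF H2] by (intro fin_bij_image[OF fa1(1) fa2(1)]) blast+
  have C: "(\<lambda>(a, r, b). (subst h1 a, r, subst h1 b)) ` comps q1 = comps q2"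
    using comps_into[OF H1 c2(3)] comps_into[OF H2 c1(3)] by (intro fin_bij_image[OF fa1(2) fa2(2)]) blast+
  have A': "(\<lambda>(R, ts). (R, map (ren h) ts)) ` atoms q1 = atoms q2"
  proof -
    have "(\<lambda>(R, ts). (R, map (ren h) ts)) ` atoms q1 = (\<lambda>(R, ts). (R, map (subst h1) ts)) ` atoms q1"
    proof (rule image_cong[OF refl])
      fix x assume x: "x \<in> atoms q1"
      obtain R ts where xa: "x = (R, ts)" by (cases x) auto
      have "set ts \<subseteq> terms q1" using x xa atom_terms[of R ts q1] by blast
      hence "map (ren h) ts = map (subst h1) ts" using rs by (simp add: subset_iff)
      thus "(\<lambda>(R, ts). (R, map (ren h) ts)) x = (\<lambda>(R, ts). (R, map (subst h1) ts)) x" using xa by simp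
    qed
    thus ?thesis using A by simp
  qed
  have C': "(\<lambda>(a, r, b). (ren h a, r, ren h b)) ` comps q1 = comps q2"
  proof -
    have "(\<lambda>(a, r, b). (ren h a, r, ren h b)) ` comps q1 = (\<lambda>(a, r, b). (subst h1 a, r, subst h1 b)) ` comps q1"
    proof (rule image_cong[OF refl])
      fix x assume x: "x \<in> comps q1"
      obtain a r b where xa: "x = (a, r, b)" by (cases x) auto
      have "a \<in> terms q1" "b \<in> terms q1" using x xa comp_terms[of a r b q1] by blast+
      hence "ren h a = subst h1 a" "ren h b = subst h1 b" using rs by blast+
      thus "(\<lambda>(a, r, b). (ren h a, r, ren h b)) x = (\<lambda>(a, r, b). (subst h1 a, r, subst h1 b)) x" using xa by simp
    qed
    thus ?thesis using C by simp
  qed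
  show ?thesis unfolding iso_def using bij xsc A' C' by blast
qed

end
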